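(* Let $P,Q\in R[x][\partial]$. If $P$ and $Q$ are $R$-primitive, then so is $PQ$.
   Context: $R$ is a principal ideal domain; $\sigma$ is an $R$-automorphism of $R[x]$ with $\sigma(x)=\gamma x+\tau$ ($\gamma,\tau\in R$, $\gamma$ a unit), $\delta$ an $R$-linear $\sigma$-derivation of $R[x]$ with $\delta(x)$ of degree at most $1$; $R[x][\partial]$ is the Ore algebra with $\partial p=\sigma(p)\partial+\delta(p)$. Writing $L=a_kf_k\partial^k+\dots+a_0f_0$ with $a_i\in R$ and $f_i\in R[x]$ primitive (coefficients with gcd $1$), $L$ is $R$-primitive if $\gcd(a_0,\dots,a_k)=1$. *)

theory Defs
  imports "HOL-Computational_Algebra.Polynomial_Factorial"
begin

definition is_PID_ring :: "'a::comm_ring_1 itself \<Rightarrow> bool" where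
  "is_PID_ring _ \<longleftrightarrow>
     (\<forall>I :: 'a set. (0 \<in> I \<and> (\<forall>x\<in>I. \<forall>y\<in>I. x + y \<in> I) \<and> (\<forall>x\<in>I. \<forall>r. r * x \<in> I))
        \<longrightarrow> (\<exists>g. I = {r * g | r. True}))"

definition ore_sigma :: "'a::comm_ring_1 \<Rightarrow> 'a \<Rightarrow> 'a poly \<Rightarrow> 'a poly" where
  "ore_sigma \<gamma> \<tau> p = pcompose p [:\<tau>, \<gamma>:]"

text \<open>An element of R[x][d] is represented as an 'a poly poly: the coefficient of d^i is
  coeff L i.  Left multiplication by d:  d (p d^i) = sigma(p) d^(i+1) + delta(p) d^i.\<close>
definition ore_dmul :: "('a::comm_ring_1 poly \<Rightarrow> 'a poly) \<Rightarrow> ('a poly \<Rightarrow> 'a poly)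
    \<Rightarrow> 'a poly poly \<Rightarrow> 'a poly poly" where
  "ore_dmul \<sigma> \<delta> L = pCons 0 (map_poly \<sigma> L) + map_poly \<delta> L"

definition ore_mult :: "('a::comm_ring_1 poly \<Rightarrow> 'a poly) \<Rightarrow> ('a poly \<Rightarrow> 'a poly)
    \<Rightarrow> 'a poly poly \<Rightarrow> 'a poly poly \<Rightarrow> 'a poly poly" where
  "ore_mult \<sigma> \<delta> P Q = (\<Sum>i\<le>degree P. smult (coeff P i) ((ore_dmul \<sigma> \<delta> ^^ i) Q))"

definition R_primitive :: "'a::factorial_ring_gcd poly poly \<Rightarrow> bool" where
  "R_primitive L \<longleftrightarrow>
     (\<exists>(a :: nat \<Rightarrow> 'a) (f :: nat \<Rightarrow> 'a poly).
        (\<forall>i\<le>degree L. coeff L i = smult (a i) (f i) \<and> content (f i) = 1) \<and>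
        Gcd (a ` {..degree L}) = 1)"

end

theory Submission
  imports Defs
begin

definition "Dv p L \<longleftrightarrow> (\<forall>i. [:p:] dvd coeff L i)"

lemma decomp:
  fixes P :: "'a::comm_ring_1 poly poly"
  assumes "\<not> Dv p P"
  shows "\<exists>P1 P2. P = P1 + P2 \<and> Dv p P2 \<and> \<not> [:p:] dvd lead_coeff P1"
proof -
  define S where "S = {k. \<not> [:p:] dvd coeff P k}"
  have Ssub: "S \<subseteq> {..degree P}"
    unfolding S_def by (auto, metis coeff_eq_0 dvd_0_right not_le)
  have fin: "finite S" using Ssub finite_subset by blast
  have ne: "S \<noteq> {}" using assms unfolding S_def Dv_def by auto
  define i where "i = Max S"
  have iS: "i \<in> S" using fin ne i_def by simp
  have imax: "\<And>k. k > i \<Longrightarrow> [:p:] dvd coeff P k"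
    using fin i_def Max_ge S_def by (metis mem_Collect_eq not_le)
  define P1 where "P1 = (\<Sum>k\<le>i. monom (coeff P k) k)"
  have cP1: "coeff P1 n = (if n \<le> i then coeff P n else 0)" for n
    unfolding P1_def by (simp add: coeff_sum coeff_monom)
  have ci: "coeff P i \<noteq> 0" using iS S_def by auto
  have "degree P1 = i"
  proof (rule antisym)
    show "degree P1 \<le> i" by (rule degree_le) (simp add: cP1)
    show "i \<le> degree P1" by (rule le_degree) (simp add: cP1 ci)
  qed
  then have lc: "lead_coeff P1 = coeff P i" by (simp add: cP1)
  have "Dv p (P - P1)"
    unfolding Dv_def using imax by (auto simp: cP1 not_le)
  then show ?thesis using lc iS S_def by (intro exI[of _ P1] exI[of _ "P - P1"]) auto
qed

lemma content_pp:
  fixes q :: "'a::factorial_ring_gcd poly"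
  assumes "q \<noteq> 0"
  shows "content (primitive_part q) = 1"
proof -
  let ?c = "content q" and ?f = "primitive_part q"
  let ?d = "content ?f"
  obtain g where g: "?f = [:?d:] * g" using content_dvd by (metis dvdE)
  have g': "?f = smult ?d g" using g by simp
  have "q = smult ?c ?f" by simp
  also have "\<dots> = smult (?c * ?d) g" by (subst g') simp
  also have "\<dots> = [:?c * ?d:] * g" by simp
  finally have "[:?c * ?d:] dvd q" by (metis dvd_triv_left)
  then have "?c * ?d dvd ?c" using const_poly_dvd_iff_dvd_content by blast
  moreover have "?c \<noteq> 0" using assms by simp
  ultimately have "?d dvd 1" by (metis dvd_mult_cancel_left mult.right_neutral)
  then have "normalize ?d = 1" by (simp add: is_unit_normalize del: normalize_content)
  then show ?thesis by simp
qed

lemma R_primitive_iff: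
  fixes L :: "'a::factorial_ring_gcd poly poly"
  shows "R_primitive L \<longleftrightarrow> (\<forall>p. (p = 0 \<or> prime p) \<longrightarrow> \<not> Dv p L)"
proof
  assume "R_primitive L"
  then obtain a f where af: "\<forall>i\<le>degree L. coeff L i = smult (a i) (f i) \<and> content (f i) = 1"
    and g: "Gcd (a ` {..degree L}) = 1" unfolding R_primitive_def by blast
  show "\<forall>p. (p = 0 \<or> prime p) \<longrightarrow> \<not> Dv p L"
  proof (intro allI impI notI)
    fix p assume pp: "p = 0 \<or> prime p" and d: "Dv p L"
    have "p dvd a i" if "i \<le> degree L" for i
    proof -
      have "[:p:] dvd coeff L i" using d Dv_def by blast
      then have dv: "[:p:] dvd smult (a i) (f i)" using af that by simp
      have c1: "content (f i) = 1" using af that by simp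
      show ?thesis
      proof (cases "p = 0")
        case True
        then have "smult (a i) (f i) = 0" using dv by simp
        moreover have "f i \<noteq> 0" using c1 by auto
        ultimately show ?thesis using True by simp
      next
        case False
        then have pr: "prime p" using pp by simp
        show ?thesis
        proof (rule ccontr)
          assume na: "\<not> p dvd a i"
          have "p dvd coeff (f i) n" for n
          proof -
            have "p dvd a i * coeff (f i) n" using dv const_poly_dvd_iff[of p] by (metis coeff_smult)
            then show ?thesis using na pr prime_dvd_mult_iff by blast
          qed
          then have "[:p:] dvd f i" using const_poly_dvd_iff by blast
          then have "p dvd 1" using c1 const_poly_dvd_iff_dvd_content by metis
          then show False using pr by (simp add: prime_def prime_elem_def)
        qed
      qed
    qed
    then have "p dvd Gcd (a ` {..degree L})" by (auto intro: Gcd_greatest)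
    then have "p dvd 1" using g by simp
    then show False using pp by (auto simp: prime_def prime_elem_def)
  qed
next
  assume H: "\<forall>p. (p = 0 \<or> prime p) \<longrightarrow> \<not> Dv p L"
  define a where "a i = content (coeff L i)" for i
  define f where "f i = (if coeff L i = 0 then 1 else primitive_part (coeff L i))" for i
  have 1: "\<forall>i\<le>degree L. coeff L i = smult (a i) (f i) \<and> content (f i) = 1"
    by (auto simp: a_def f_def content_pp)
  have 2: "Gcd (a ` {..degree L}) = 1"
  proof -
    let ?g = "Gcd (a ` {..degree L})"
    have dv: "\<And>b. b dvd ?g \<Longrightarrow> Dv b L"
    proof -
      fix b assume "b dvd ?g"
      then have "b dvd a i" if "i \<le> degree L" for i
        using that by (meson Gcd_dvd atMost_iff dvd_trans image_eqI)
      then show "Dv b L" unfolding Dv_def a_def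
        by (metis const_poly_dvd_iff_dvd_content coeff_eq_0 dvd_0_right not_le)
    qed
    have "?g \<noteq> 0" using dv[of 0] H by auto
    moreover have "is_unit ?g"
    proof (rule ccontr)
      assume "\<not> is_unit ?g"
      then obtain b where "b dvd ?g" "prime b" using prime_divisor_exists \<open>?g \<noteq> 0\<close> by blast
      then show False using dv H by blast
    qed
    ultimately show ?thesis by (metis normalize_Gcd is_unit_normalize)
  qed
  show "R_primitive L" unfolding R_primitive_def using 1 2 by blast
qed

context
  fixes \<gamma> \<tau> :: "'a::factorial_ring_gcd"
    and \<delta> :: "'a poly \<Rightarrow> 'a poly"
  assumes unit: "is_unit \<gamma>"
    and delta_add: "\<And>p q. \<delta> (p + q) = \<delta> p + \<delta> q"
    and delta_smult: "\<And>c p. \<delta> (smult c p) = smult c (\<delta> p)"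
begin

abbreviation "sg \<equiv> ore_sigma \<gamma> \<tau>"
abbreviation "dm \<equiv> ore_dmul sg \<delta>"

lemma delta0: "\<delta> 0 = 0"
proof -
  have "\<delta> 0 + \<delta> 0 = \<delta> 0" using delta_add[of 0 0] by simp
  then show ?thesis by (metis add_cancel_right_right)
qed

lemma pc_dvd: "[:p:] dvd q \<Longrightarrow> [:p:] dvd pcompose q r"
proof -
  assume "[:p:] dvd q"
  then obtain s where "q = [:p:] * s" by blast
  then have "pcompose q r = [:p:] * pcompose s r" by (metis pcompose_mult pcompose_const)
  then show ?thesis by (metis dvd_triv_left)
qed

lemma sg0: "sg 0 = 0" by (simp add: ore_sigma_def)

lemma sg_add: "sg (a + b) = sg a + sg b" by (simp add: ore_sigma_def pcompose_add)

lemma sg_dvd: "[:p:] dvd q \<Longrightarrow> [:p:] dvd sg q"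
  unfolding ore_sigma_def by (rule pc_dvd)

lemma delta_dvd: "[:p:] dvd q \<Longrightarrow> [:p:] dvd \<delta> q"
proof -
  assume "[:p:] dvd q"
  then obtain r where "q = [:p:] * r" by blast
  then have "\<delta> q = [:p:] * \<delta> r" using delta_smult[of p r] by simp
  moreover have "smult p (\<delta> r) = [:p:] * \<delta> r" by simp
  ultimately show ?thesis by (metis dvd_triv_left)
qed

lemma sg_inv_dvd: "[:p:] dvd sg q \<Longrightarrow> [:p:] dvd q"
proof -
  assume a: "[:p:] dvd sg q"
  obtain u where u: "\<gamma> * u = 1" using unit by (metis dvdE)
  have "pcompose [:\<tau>, \<gamma>:] [:- \<tau> * u, u:] = [:0, 1:]"
    by (simp add: pcompose_pCons u algebra_simps)
  then have "pcompose (sg q) [:- \<tau> * u, u:] = q"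
    by (simp add: ore_sigma_def flip: pcompose_assoc)
  moreover have "[:p:] dvd pcompose (sg q) [:- \<tau> * u, u:]"
    using a by (rule pc_dvd)
  ultimately show ?thesis by simp
qed

lemma sg_pow_inv_dvd: "[:p:] dvd (sg ^^ k) q \<Longrightarrow> [:p:] dvd q"
  by (induction k) (auto dest: sg_inv_dvd)

lemma coeff_dm: "coeff (dm L) n = (if n = 0 then 0 else sg (coeff L (n - 1))) + \<delta> (coeff L n)"
  by (cases n) (simp_all add: ore_dmul_def coeff_map_poly sg0 delta0)

lemma dm_add: "dm (L + M) = dm L + dm M"
  by (rule poly_eqI) (simp add: coeff_dm sg_add delta_add)

lemma dm_pow_add: "(dm ^^ k) (L + M) = (dm ^^ k) L + (dm ^^ k) M"
  by (induction k) (simp_all add: dm_add)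


lemma Dv_dm: "Dv p L \<Longrightarrow> Dv p (dm L)"
  unfolding Dv_def by (auto simp: coeff_dm intro!: sg_dvd delta_dvd dvd_add)

lemma Dv_dm_pow: "Dv p L \<Longrightarrow> Dv p ((dm ^^ k) L)"
  by (induction k) (auto intro: Dv_dm)

lemma dm_deg: "degree M \<le> d \<Longrightarrow> degree (dm M) \<le> d + 1 \<and> coeff (dm M) (d + 1) = sg (coeff M d)"
proof -
  assume a: "degree M \<le> d"
  have "\<forall>i>d+1. coeff (dm M) i = 0"
    using a by (auto simp: coeff_dm coeff_eq_0 sg0 delta0)
  then show ?thesis using a by (auto simp: coeff_dm coeff_eq_0 delta0 intro: degree_le)
qed

lemma dm_pow_deg: "degree ((dm ^^ k) L) \<le> degree L + k \<and>
    coeff ((dm ^^ k) L) (degree L + k) = (sg ^^ k) (lead_coeff L)"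
proof (induction k)
  case 0 then show ?case by simp
next
  case (Suc k)
  then show ?case using dm_deg[of "(dm ^^ k) L" "degree L + k"] by simp
qed

lemma ore_mult_N: "degree P \<le> N \<Longrightarrow>
    ore_mult sg \<delta> P Q = (\<Sum>i\<le>N. smult (coeff P i) ((dm ^^ i) Q))"
  unfolding ore_mult_def
  by (rule sum.mono_neutral_left) (auto simp: coeff_eq_0)

lemma ore_mult_addL: "ore_mult sg \<delta> (P1 + P2) Q = ore_mult sg \<delta> P1 Q + ore_mult sg \<delta> P2 Q"
proof -
  let ?N = "max (degree P1) (max (degree P2) (degree (P1 + P2)))"
  show ?thesis
    by (subst (1 2 3) ore_mult_N[of _ ?N]) (auto simp: smult_add_left sum.distrib)
qed

lemma ore_mult_addR: "ore_mult sg \<delta> P (Q1 + Q2) = ore_mult sg \<delta> P Q1 + ore_mult sg \<delta> P Q2"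
  unfolding ore_mult_def by (simp add: dm_pow_add smult_add_right sum.distrib)

lemma Dv_multL: "Dv p P \<Longrightarrow> Dv p (ore_mult sg \<delta> P Q)"
  unfolding Dv_def ore_mult_def by (auto simp: coeff_sum intro!: dvd_sum)

lemma Dv_multR: "Dv p Q \<Longrightarrow> Dv p (ore_mult sg \<delta> P Q)"
  using Dv_dm_pow unfolding Dv_def ore_mult_def by (auto simp: coeff_sum intro!: dvd_sum)

lemma top_coeff: "coeff (ore_mult sg \<delta> P Q) (degree P + degree Q)
   = lead_coeff P * (sg ^^ degree P) (lead_coeff Q)"
proof -
  have "coeff (ore_mult sg \<delta> P Q) (degree P + degree Q)
     = (\<Sum>k\<le>degree P. coeff P k * coeff ((dm ^^ k) Q) (degree P + degree Q))"
    unfolding ore_mult_def by (simp add: coeff_sum)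
  also have "\<dots> = (\<Sum>k\<le>degree P. if k = degree P then lead_coeff P * (sg ^^ degree P) (lead_coeff Q) else 0)"
  proof (rule sum.cong)
    fix k assume "k \<in> {..degree P}"
    show "coeff P k * coeff ((dm ^^ k) Q) (degree P + degree Q) =
      (if k = degree P then lead_coeff P * (sg ^^ degree P) (lead_coeff Q) else 0)"
    proof (cases "k = degree P")
      case True then show ?thesis using dm_pow_deg[of k Q] by (simp add: add.commute)
    next
      case False
      with \<open>k \<in> _\<close> have "k < degree P" by auto
      then have "coeff ((dm ^^ k) Q) (degree P + degree Q) = 0"
        using dm_pow_deg[of k Q] by (intro coeff_eq_0) auto
      then show ?thesis using False by simp
    qed
  qed simp
  also have "\<dots> = lead_coeff P * (sg ^^ degree P) (lead_coeff Q)" by simp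
  finally show ?thesis .
qed

lemma main_lemma:
  assumes hp: "\<And>a b. [:p:] dvd a * b \<Longrightarrow> [:p:] dvd a \<or> [:p:] dvd b"
    and nP: "\<not> Dv p P" and nQ: "\<not> Dv p Q"
  shows "\<not> Dv p (ore_mult sg \<delta> P Q)"
proof
  assume d: "Dv p (ore_mult sg \<delta> P Q)"
  obtain P1 P2 where P: "P = P1 + P2" "Dv p P2" "\<not> [:p:] dvd lead_coeff P1"
    using decomp[OF nP] by blast
  obtain Q1 Q2 where Q: "Q = Q1 + Q2" "Dv p Q2" "\<not> [:p:] dvd lead_coeff Q1"
    using decomp[OF nQ] by blast
  have eq: "ore_mult sg \<delta> P Q = ore_mult sg \<delta> P1 Q1 + (ore_mult sg \<delta> P1 Q2 + ore_mult sg \<delta> P2 Q)"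
    by (simp add: P(1) Q(1) ore_mult_addL ore_mult_addR add.assoc)
  have d2: "Dv p (ore_mult sg \<delta> P1 Q2 + ore_mult sg \<delta> P2 Q)"
    using Dv_multR[OF Q(2)] Dv_multL[OF P(2)] unfolding Dv_def by (auto intro: dvd_add)
  have "Dv p (ore_mult sg \<delta> P1 Q1)"
    using d d2 unfolding eq Dv_def by (metis coeff_add dvd_add_left_iff)
  then have "[:p:] dvd lead_coeff P1 * (sg ^^ degree P1) (lead_coeff Q1)"
    unfolding Dv_def top_coeff[symmetric] by blast
  then show False using hp P(3) Q(3) sg_pow_inv_dvd by blast
qed

end

theorem mainTheorem15:
  fixes \<gamma> \<tau> :: "'a::factorial_ring_gcd"
    and \<delta> :: "'a poly \<Rightarrow> 'a poly"
    and P Q :: "'a poly poly"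
  assumes PID: "is_PID_ring TYPE('a)"
    and unit: "is_unit \<gamma>"
    and delta_add: "\<And>p q. \<delta> (p + q) = \<delta> p + \<delta> q"
    and delta_smult: "\<And>c p. \<delta> (smult c p) = smult c (\<delta> p)"
    and delta_deriv: "\<And>p q. \<delta> (p * q) = ore_sigma \<gamma> \<tau> p * \<delta> q + \<delta> p * q"
    and delta_x: "degree (\<delta> [:0, 1:]) \<le> 1"
    and "R_primitive P" and "R_primitive Q"
  shows "R_primitive (ore_mult (ore_sigma \<gamma> \<tau>) \<delta> P Q)"
proof -
  have nP: "\<And>p. p = 0 \<or> prime p \<Longrightarrow> \<not> Dv p P" and nQ: "\<And>p. p = 0 \<or> prime p \<Longrightarrow> \<not> Dv p Q"
    using assms(7,8) R_primitive_iff by blast+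
  show ?thesis unfolding R_primitive_iff
  proof (intro allI impI)
    fix p :: 'a assume pp: "p = 0 \<or> prime p"
    have hp: "[:p:] dvd a * b \<Longrightarrow> [:p:] dvd a \<or> [:p:] dvd b" for a b :: "'a poly"
    proof -
      assume h: "[:p:] dvd a * b"
      show ?thesis
      proof (cases "p = 0")
        case True then show ?thesis using h by simp
      next
        case False
        then have "prime_elem [:p:]" using pp by (simp add: prime_elem_const_poly_iff prime_def)
        then show ?thesis using h prime_elem_dvd_mult_iff by blast
      qed
    qed
    show "\<not> Dv p (ore_mult (ore_sigma \<gamma> \<tau>) \<delta> P Q)"
      by (rule main_lemma[OF unit delta_add delta_smult hp nP[OF pp] nQ[OF pp]]) auto
  qed
qed

end
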